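(* Let $l_1,m_1,l_2,m_2,n$ be positive integers with $l_1\le m_1<l_2\le m_2$. Let $\Psi(l_1,m_1,l_2,m_2,n)$ be the number of subsets $X\subseteq[l_1,m_1]\cup[l_2,m_2]$ with $l_1\in X$, $l_2\in X$ and $\gcd(X\cup\{n\})=1$, and for an integer $k\ge 2$ let $\Psi_k(l_1,m_1,l_2,m_2,n)$ be the number of such subsets that moreover have exactly $k$ elements. Then \[ \text{(a)}\quad \Psi(l_1,m_1,l_2,m_2,n)=\sum_{d\mid \gcd(l_1,l_2,n)}\mu(d)\,2^{\lfloor m_1/d\rfloor+\lfloor m_2/d\rfloor-(l_1+l_2)/d}, \] \[ \text{(b)}\quad \Psi_k(l_1,m_1,l_2,m_2,n)=\sum_{d\mid \gcd(l_1,l_2,n)}\mu(d)\binom{\lfloor m_1/d\rfloor+\lfloor m_2/d\rfloor-(l_1+l_2)/d}{k-2}. \]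
   Context: $[l,m]=\{l,l+1,\ldots,m\}$ for positive integers $l\le m$. $\mu$ is the Möbius function, $\lfloor x\rfloor$ the floor function, and $\gcd(S)$ the greatest common divisor of a finite nonempty set $S$ of positive integers. *)

theory Defs
  imports "HOL-Computational_Algebra.Computational_Algebra"
begin

definition moebius :: "nat \<Rightarrow> int" where
  "moebius d = (if squarefree d then (-1) ^ card (prime_factors d) else 0)"

definition Psi_sets :: "nat \<Rightarrow> nat \<Rightarrow> nat \<Rightarrow> nat \<Rightarrow> nat \<Rightarrow> nat set set" where
  "Psi_sets l1 m1 l2 m2 n =
     {X. X \<subseteq> {l1..m1} \<union> {l2..m2} \<and> l1 \<in> X \<and> l2 \<in> X \<and> Gcd (X \<union> {n}) = 1}"

definition Psi :: "nat \<Rightarrow> nat \<Rightarrow> nat \<Rightarrow> nat \<Rightarrow> nat \<Rightarrow> nat" where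
  "Psi l1 m1 l2 m2 n = card (Psi_sets l1 m1 l2 m2 n)"

definition Psi_k :: "nat \<Rightarrow> nat \<Rightarrow> nat \<Rightarrow> nat \<Rightarrow> nat \<Rightarrow> nat \<Rightarrow> nat" where
  "Psi_k k l1 m1 l2 m2 n = card {X \<in> Psi_sets l1 m1 l2 m2 n. card X = k}"

end

theory Submission imports Defs begin

lemma pow_alt_sum:
  assumes "finite P" "P \<noteq> {}"
  shows "(\<Sum>S\<in>Pow P. (-1::int) ^ card S) = 0"
proof -
  obtain a where a: "a \<in> P" using assms by auto
  let ?Q = "P - {a}"
  have fQ: "finite ?Q" using assms by auto
  have P: "P = insert a ?Q" using a by auto
  have "(\<Sum>S\<in>Pow P. (-1::int) ^ card S) = (\<Sum>S\<in>Pow (insert a ?Q). (-1::int) ^ card S)"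
    using P by simp
  also have "\<dots> = (\<Sum>S\<in>Pow ?Q. (-1::int) ^ card S) + (\<Sum>S\<in>insert a ` Pow ?Q. (-1::int) ^ card S)"
    by (subst Pow_insert, rule sum.union_disjoint) (use fQ in auto)
  also have "(\<Sum>S\<in>insert a ` Pow ?Q. (-1::int) ^ card S) = (\<Sum>S\<in>Pow ?Q. (-1::int) ^ card (insert a S))"
  proof (rule sum.reindex[unfolded comp_def])
    show "inj_on (insert a) (Pow ?Q)" by (auto simp: inj_on_def)
  qed
  also have "\<dots> = (\<Sum>S\<in>Pow ?Q. - ((-1::int) ^ card S))"
  proof (rule sum.cong[OF refl])
    fix S assume "S \<in> Pow ?Q"
    then have "finite S" "a \<notin> S" using fQ finite_subset by auto
    then show "(-1::int) ^ card (insert a S) = - ((-1) ^ card S)" by simp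
  qed
  finally show ?thesis by (simp add: sum_negf)
qed

lemma prod_primes_facts:
  fixes S :: "nat set"
  assumes "finite S" "\<And>p. p \<in> S \<Longrightarrow> prime p"
  shows "prime_factors (\<Prod>S) = S" "squarefree (\<Prod>S)" "\<Prod>S > 0"
proof -
  have nz: "0 \<notin> id ` S" using assms by (metis id_apply image_iff not_prime_0)
  show "prime_factors (\<Prod>S) = S"
    using prime_factors_prod[OF assms(1) nz] assms(2) by (auto simp: prime_prime_factors)
  show "squarefree (\<Prod>S)"
    using squarefree_prod_coprime[of S id] assms
    by (simp add: primes_coprime squarefree_prime)
  show "\<Prod>S > 0" using assms by (auto intro!: prod_pos prime_gt_0_nat)
qed

lemma squarefree_prod_pf:
  fixes d :: nat
  assumes "squarefree d" 
  shows "\<Prod>(prime_factors d) = d"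
proof -
  have d0: "d \<noteq> 0" using assms by (metis not_squarefree_0)
  have "(\<Prod>p \<in> prime_factors d. p ^ multiplicity p d) = d"
    using prod_prime_factors[OF d0] by simp
  moreover have "(\<Prod>p \<in> prime_factors d. p ^ multiplicity p d) = \<Prod>(prime_factors d)"
    using assms d0 by (intro prod.cong) (auto simp: squarefree_factorial_semiring')
  ultimately show ?thesis by simp
qed

lemma moebius_sum:
  fixes g :: nat
  assumes "g > 0"
  shows "(\<Sum>d | d dvd g. moebius d) = (if g = 1 then 1 else 0)"
proof -
  let ?P = "prime_factors g"
  have fin: "finite {d. d dvd g}" using assms by auto
  have "(\<Sum>d | d dvd g. moebius d) = (\<Sum>d \<in> {d. d dvd g \<and> squarefree d}. moebius d)"
    by (rule sum.mono_neutral_right) (use fin in \<open>auto simp: moebius_def\<close>)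
  also have "\<dots> = (\<Sum>S\<in>Pow ?P. moebius (\<Prod>S))"
  proof (rule sum.reindex_bij_betw[symmetric])
    show "bij_betw Prod (Pow ?P) {d. d dvd g \<and> squarefree d}"
    proof (rule bij_betw_byWitness[where f' = prime_factors])
      show "\<forall>S\<in>Pow ?P. prime_factors (\<Prod>S) = S"
        by (auto intro!: prod_primes_facts(1) intro: finite_subset)
      show "\<forall>d\<in>{d. d dvd g \<and> squarefree d}. \<Prod>(prime_factors d) = d"
        by (auto intro: squarefree_prod_pf)
      show "Prod ` Pow ?P \<subseteq> {d. d dvd g \<and> squarefree d}"
      proof safe
        fix S assume S: "S \<subseteq> ?P"
        then have fS: "finite S" by (auto intro: finite_subset)
        have pr: "\<And>p. p \<in> S \<Longrightarrow> prime p" using S by auto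
        show "squarefree (\<Prod>S)" using prod_primes_facts(2)[OF fS pr] .
        have "\<Prod>S dvd \<Prod>?P" using S by (intro prod_dvd_prod_subset) auto
        also have "\<Prod>?P dvd (\<Prod>p \<in> ?P. p ^ multiplicity p g)"
          by (intro prod_dvd_prod) (auto simp: prime_factors_multiplicity intro!: dvd_power)
        also have "\<dots> = g" using prod_prime_factors[of g] assms by simp
        finally show "\<Prod>S dvd g" .
      qed
      show "prime_factors ` {d. d dvd g \<and> squarefree d} \<subseteq> Pow ?P"
        using assms dvd_prime_factors[of g] by blast
    qed
  qed
  also have "\<dots> = (\<Sum>S\<in>Pow ?P. (-1::int) ^ card S)"
  proof (rule sum.cong[OF refl])
    fix S assume S: "S \<in> Pow ?P"
    then have fS: "finite S" by (auto intro: finite_subset)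
    have pr: "\<And>p. p \<in> S \<Longrightarrow> prime p" using S by auto
    show "moebius (\<Prod>S) = (-1) ^ card S"
      using prod_primes_facts[OF fS pr] by (simp add: moebius_def)
  qed
  also have "\<dots> = (if g = 1 then 1 else 0)"
  proof (cases "g = 1")
    case True then show ?thesis by simp
  next
    case False
    then obtain p where "prime p" "p dvd g" using prime_factor_nat[of g] by blast
    then have "?P \<noteq> {}" using assms by (auto simp: prime_factors_dvd)
    then show ?thesis using pow_alt_sum[of ?P] False by simp
  qed
  finally show ?thesis .
qed


lemma mult_count:
  fixes a b d :: nat
  assumes "d > 0" "d dvd a"
  shows "card {x\<in>{a<..b}. d dvd x} = b div d - a div d"
proof -
  obtain a' where a: "a = d * a'" using assms by auto
  have "{x\<in>{a<..b}. d dvd x} = (\<lambda>j. d * j) ` {a'<..b div d}"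
  proof safe
    fix x assume x: "x \<in> {a<..b}" "d dvd x"
    then obtain j where j: "x = d * j" by auto
    have "a' < j" using x j a assms by auto
    moreover have "j \<le> b div d" using x j assms
      by (metis greaterThanAtMost_iff div_le_mono nonzero_mult_div_cancel_left not_gr0)
    ultimately show "x \<in> (\<lambda>j. d * j) ` {a'<..b div d}" using j by auto
  next
    fix j assume "j \<in> {a'<..b div d}"
    then have "a' < j" "j \<le> b div d" by auto
    then show "d * j \<in> {a<..b}" using a assms
      by (auto simp: less_eq_div_iff_mult_less_eq mult.commute)
  qed auto
  moreover have "inj_on (\<lambda>j. d * j) {a'<..b div d}" using assms by (auto simp: inj_on_def)
  ultimately show ?thesis using a assms by (simp add: card_image)
qed

lemma moebius_count:
  fixes A :: "nat set set" and n :: nat and g0 :: nat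
  assumes finA: "finite A" and n: "n > 0" and g0: "g0 > 0"
    and sub: "\<And>X d. X \<in> A \<Longrightarrow> d dvd Gcd (X \<union> {n}) \<Longrightarrow> d dvd g0"
  shows "int (card {X\<in>A. Gcd (X \<union> {n}) = 1 \<and> Q X})
     = (\<Sum>d | d dvd g0. moebius d * int (card {X\<in>A. Q X \<and> d dvd Gcd (X \<union> {n})}))"
proof -
  let ?G = "\<lambda>X. Gcd (X \<union> {n})"
  let ?D = "{d. d dvd g0}"
  have finD: "finite ?D" using g0 by auto
  have Gpos: "?G X > 0" for X using n by (auto simp: Gcd_0_iff)
  have "int (card {X\<in>A. ?G X = 1 \<and> Q X}) = (\<Sum>X\<in>A. if Q X then (if ?G X = 1 then 1 else 0) else 0)"
    using finA by (simp add: sum.If_cases Int_def) (metis (no_types, lifting) Collect_cong)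
  also have "\<dots> = (\<Sum>X\<in>A. \<Sum>d\<in>?D. if Q X \<and> d dvd ?G X then moebius d else 0)"
  proof (rule sum.cong[OF refl])
    fix X assume X: "X \<in> A"
    have "(\<Sum>d\<in>?D. if Q X \<and> d dvd ?G X then moebius d else 0)
        = (if Q X then (\<Sum>d \<in> {d. d dvd ?G X}. moebius d) else 0)"
    proof (cases "Q X")
      case True
      have e: "{d. d dvd ?G X} = {d\<in>?D. d dvd ?G X}" using sub[OF X] by auto
      show ?thesis unfolding e sum.inter_filter[OF finD] using True by simp
    qed simp
    then show "(if Q X then (if ?G X = 1 then 1 else 0) else 0)
        = (\<Sum>d\<in>?D. if Q X \<and> d dvd ?G X then moebius d else 0)"
      using moebius_sum[OF Gpos[of X]] by simp
  qed
  also have "\<dots> = (\<Sum>d\<in>?D. \<Sum>X\<in>A. if Q X \<and> d dvd ?G X then moebius d else 0)"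
    by (rule sum.swap)
  also have "\<dots> = (\<Sum>d\<in>?D. moebius d * int (card {X\<in>A. Q X \<and> d dvd ?G X}))"
    using finA by (intro sum.cong refl) (simp add: sum.If_cases Int_def)
  finally show ?thesis .
qed


lemma exponent_eq:
  fixes l1 m1 l2 m2 d :: nat
  assumes "d > 0" "d dvd l1" "d dvd l2" "l1 \<le> m1" "l2 \<le> m2"
  shows "nat (\<lfloor>real m1 / real d\<rfloor> + \<lfloor>real m2 / real d\<rfloor> - (int l1 + int l2) div int d)
       = m1 div d - l1 div d + (m2 div d - l2 div d)"
proof -
  have f1: "\<lfloor>real m1 / real d\<rfloor> = int (m1 div d)" using floor_divide_of_nat_eq[where 'a=real] by simp
  have f2: "\<lfloor>real m2 / real d\<rfloor> = int (m2 div d)" using floor_divide_of_nat_eq[where 'a=real] by simp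
  have f3: "(int l1 + int l2) div int d = int (l1 div d + l2 div d)"
    using assms by (simp add: zdiv_int[symmetric] div_add)
  have "l1 div d \<le> m1 div d" "l2 div d \<le> m2 div d" using assms by (auto intro: div_le_mono)
  then show ?thesis unfolding f1 f2 f3 by linarith
qed

lemma count_d:
  fixes l1 m1 l2 m2 n d :: nat and Q :: "nat \<Rightarrow> bool"
  assumes "l1 \<le> m1" "m1 < l2" "l2 \<le> m2" "d > 0" "d dvd l1" "d dvd l2" "d dvd n"
  defines "A \<equiv> {X. X \<subseteq> {l1..m1} \<union> {l2..m2} \<and> l1 \<in> X \<and> l2 \<in> X}"
  defines "B \<equiv> {x\<in>{l1<..m1}. d dvd x} \<union> {x\<in>{l2<..m2}. d dvd x}"
  shows "card {X\<in>A. Q (card X) \<and> d dvd Gcd (X \<union> {n})} = card {Y. Y \<subseteq> B \<and> Q (card Y + 2)}"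
    and "card B = m1 div d - l1 div d + (m2 div d - l2 div d)"
proof -
  have finB: "finite B" unfolding B_def by auto
  have l1B: "l1 \<notin> B" and l2B: "l2 \<notin> B" using assms unfolding B_def by auto
  have l12: "l1 \<noteq> l2" using assms by auto
  have cardY: "card (Y \<union> {l1, l2}) = card Y + 2" if "Y \<subseteq> B" for Y
  proof -
    have "finite Y" using that finB finite_subset by blast
    moreover have "l1 \<notin> Y" "l2 \<notin> Y" using that l1B l2B by auto
    ultimately show ?thesis using l12 by simp
  qed
  have "bij_betw (\<lambda>Y. Y \<union> {l1, l2}) {Y. Y \<subseteq> B \<and> Q (card Y + 2)}
          {X\<in>A. Q (card X) \<and> d dvd Gcd (X \<union> {n})}"
  proof (rule bij_betw_byWitness[where f' = "\<lambda>X. X - {l1, l2}"])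
    show "\<forall>Y\<in>{Y. Y \<subseteq> B \<and> Q (card Y + 2)}. Y \<union> {l1, l2} - {l1, l2} = Y"
      using l1B l2B by auto
    show "\<forall>X\<in>{X\<in>A. Q (card X) \<and> d dvd Gcd (X \<union> {n})}. X - {l1, l2} \<union> {l1, l2} = X"
      unfolding A_def by auto
    show "(\<lambda>Y. Y \<union> {l1, l2}) ` {Y. Y \<subseteq> B \<and> Q (card Y + 2)}
          \<subseteq> {X\<in>A. Q (card X) \<and> d dvd Gcd (X \<union> {n})}"
    proof safe
      fix Y assume Y: "Y \<subseteq> B" "Q (card Y + 2)"
      show "Y \<union> {l1, l2} \<in> A" using Y assms unfolding A_def B_def by auto
      show "Q (card (Y \<union> {l1, l2}))" using Y cardY by simp
      show "d dvd Gcd (Y \<union> {l1, l2} \<union> {n})"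
        unfolding dvd_Gcd_iff using Y assms unfolding B_def by auto
    qed
    show "(\<lambda>X. X - {l1, l2}) ` {X\<in>A. Q (card X) \<and> d dvd Gcd (X \<union> {n})}
          \<subseteq> {Y. Y \<subseteq> B \<and> Q (card Y + 2)}"
    proof (rule image_subsetI)
      fix X assume "X \<in> {X\<in>A. Q (card X) \<and> d dvd Gcd (X \<union> {n})}"
      then have X: "X \<in> A" "Q (card X)" "d dvd Gcd (X \<union> {n})" by auto
      then have dv: "\<forall>x\<in>X. d dvd x" by (simp add: dvd_Gcd_iff)
      have sb: "X - {l1, l2} \<subseteq> B"
      proof
        fix x assume "x \<in> X - {l1, l2}"
        then show "x \<in> B" using X dv unfolding A_def B_def by auto
      qed
      have "X = (X - {l1, l2}) \<union> {l1, l2}" using X unfolding A_def by auto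
      then have "card X = card (X - {l1, l2}) + 2" using cardY[OF sb] by simp
      then show "X - {l1, l2} \<in> {Y. Y \<subseteq> B \<and> Q (card Y + 2)}" using X sb by simp
    qed
  qed
  then show "card {X\<in>A. Q (card X) \<and> d dvd Gcd (X \<union> {n})} = card {Y. Y \<subseteq> B \<and> Q (card Y + 2)}"
    by (simp add: bij_betw_same_card)
  have "card B = card {x\<in>{l1<..m1}. d dvd x} + card {x\<in>{l2<..m2}. d dvd x}"
    unfolding B_def using assms by (intro card_Un_disjoint) auto
  then show "card B = m1 div d - l1 div d + (m2 div d - l2 div d)"
    using mult_count assms by simp
qed


theorem lemma1:
  fixes l1 m1 l2 m2 n k :: nat
  assumes "0 < l1" "l1 \<le> m1" "m1 < l2" "l2 \<le> m2" "0 < n" "2 \<le> k"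
  shows "int (Psi l1 m1 l2 m2 n) =
           (\<Sum>d | d dvd gcd l1 (gcd l2 n).
              moebius d * 2 ^ (nat (\<lfloor>real m1 / real d\<rfloor> + \<lfloor>real m2 / real d\<rfloor>
                                    - (int l1 + int l2) div int d)))
       \<and> int (Psi_k k l1 m1 l2 m2 n) =
           (\<Sum>d | d dvd gcd l1 (gcd l2 n).
              moebius d * int ((nat (\<lfloor>real m1 / real d\<rfloor> + \<lfloor>real m2 / real d\<rfloor>
                                    - (int l1 + int l2) div int d)) choose (k - 2)))"
proof -
  define A where "A = {X. X \<subseteq> {l1..m1} \<union> {l2..m2} \<and> l1 \<in> X \<and> l2 \<in> X}"
  define g0 where "g0 = gcd l1 (gcd l2 n)"
  define B where "B = (\<lambda>d::nat. {x\<in>{l1<..m1}. d dvd x} \<union> {x\<in>{l2<..m2}. d dvd x})"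
  define E where "E = (\<lambda>d::nat. nat (\<lfloor>real m1 / real d\<rfloor> + \<lfloor>real m2 / real d\<rfloor>
                                    - (int l1 + int l2) div int d))"
  have finA: "finite A" unfolding A_def by (rule finite_subset[of _ "Pow ({l1..m1} \<union> {l2..m2})"]) auto
  have g0: "g0 > 0" unfolding g0_def using assms by simp
  have sub: "d dvd g0" if "X \<in> A" "d dvd Gcd (X \<union> {n})" for X d
  proof -
    have "\<forall>y\<in>X \<union> {n}. d dvd y" using that(2) by (simp add: dvd_Gcd_iff)
    then show ?thesis using that(1) unfolding A_def g0_def by auto
  qed
  have dfacts: "d > 0" "d dvd l1" "d dvd l2" "d dvd n" if "d \<in> {d. d dvd g0}" for d
    using that g0 unfolding g0_def by (auto intro: dvd_trans)
  have cardB: "card (B d) = E d" if "d \<in> {d. d dvd g0}" for d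
    unfolding B_def E_def
    using count_d(2)[of l1 m1 l2 m2 d n] exponent_eq[of d l1 l2 m1 m2] dfacts[OF that] assms by simp
  have finB: "finite (B d)" for d unfolding B_def by auto
  have key: "card {X\<in>A. Q (card X) \<and> d dvd Gcd (X \<union> {n})} = card {Y. Y \<subseteq> B d \<and> Q (card Y + 2)}"
    if "d \<in> {d. d dvd g0}" for d Q
    unfolding A_def B_def using count_d(1)[of l1 m1 l2 m2 d n Q] dfacts[OF that] assms by simp
  have PS: "Psi_sets l1 m1 l2 m2 n = {X\<in>A. Gcd (X \<union> {n}) = 1 \<and> (\<lambda>c. True) (card X)}"
    unfolding Psi_sets_def A_def by auto
  have PK: "{X \<in> Psi_sets l1 m1 l2 m2 n. card X = k} = {X\<in>A. Gcd (X \<union> {n}) = 1 \<and> (\<lambda>c. c = k) (card X)}"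
    unfolding Psi_sets_def A_def by auto
  have a: "int (Psi l1 m1 l2 m2 n) = (\<Sum>d | d dvd g0. moebius d * 2 ^ E d)"
    unfolding Psi_def PS
    apply (subst moebius_count[OF finA assms(5) g0 sub], assumption+)
  proof (rule sum.cong[OF refl])
    fix d assume d: "d \<in> {d. d dvd g0}"
    have "card {Y. Y \<subseteq> B d \<and> True} = 2 ^ E d"
      using card_Pow[OF finB[of d]] cardB[OF d] by (simp add: Pow_def)
    then show "moebius d * int (card {X\<in>A. (\<lambda>c. True) (card X) \<and> d dvd Gcd (X \<union> {n})}) = moebius d * 2 ^ E d"
      using key[OF d, of "\<lambda>c. True"] by simp
  qed
  have b: "int (Psi_k k l1 m1 l2 m2 n) = (\<Sum>d | d dvd g0. moebius d * int (E d choose (k - 2)))"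
    unfolding Psi_k_def PK
    apply (subst moebius_count[OF finA assms(5) g0 sub], assumption+)
  proof (rule sum.cong[OF refl])
    fix d assume d: "d \<in> {d. d dvd g0}"
    have "{Y. Y \<subseteq> B d \<and> card Y + 2 = k} = {Y. Y \<subseteq> B d \<and> card Y = k - 2}" using assms by auto
    then have "card {Y. Y \<subseteq> B d \<and> card Y + 2 = k} = E d choose (k - 2)"
      using n_subsets[OF finB[of d]] cardB[OF d] by simp
    then show "moebius d * int (card {X\<in>A. (\<lambda>c. c = k) (card X) \<and> d dvd Gcd (X \<union> {n})}) = moebius d * int (E d choose (k - 2))"
      using key[OF d, of "\<lambda>c. c = k"] by simp
  qed
  show ?thesis using a b unfolding g0_def E_def by simp
qed

end
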